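(* For all connected graphs $G_1$ and $G_2$, $$\operatorname{tw}(G_1\times G_2)\leq \tau(G_1)(\operatorname{tw}(G_2)+1)(\Delta(G_2)+1)\quad\text{and}\quad \operatorname{pw}(G_1\times G_2)\leq \tau(G_1)(\operatorname{pw}(G_2)+1)(\Delta(G_2)+1).$$
   Context: $\operatorname{tw}$ and $\operatorname{pw}$ denote treewidth and pathwidth; $\Delta$ denotes maximum degree. The vertex cover number $\tau(G)$ is the minimum size of a set $A\subseteq V(G)$ such that $V(G)\setminus A$ is an independent set. The direct product $G_1 \times G_2$ has vertex set $V(G_1)\times V(G_2)$, with $(a,v)(b,u)$ an edge iff $ab\in E(G_1)$ and $uv\in E(G_2)$. *)

theory Defs
  imports Main
begin

definition graph :: "'a set \<Rightarrow> ('a \<times> 'a) set \<Rightarrow> bool" where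
  "graph V E \<longleftrightarrow> finite V \<and> E \<subseteq> V \<times> V \<and> sym E \<and> irrefl E"

definition connected :: "'a set \<Rightarrow> ('a \<times> 'a) set \<Rightarrow> bool" where
  "connected V E \<longleftrightarrow> V \<noteq> {} \<and> (\<forall>u\<in>V. \<forall>v\<in>V. (u, v) \<in> (E \<inter> (V \<times> V))\<^sup>*)"

definition is_cycle :: "('a \<times> 'a) set \<Rightarrow> 'a list \<Rightarrow> bool" where
  "is_cycle E xs \<longleftrightarrow> length xs \<ge> 3 \<and> distinct xs \<and>
     (\<forall>i. i + 1 < length xs \<longrightarrow> (xs ! i, xs ! (i + 1)) \<in> E) \<and> (last xs, hd xs) \<in> E"

definition is_tree :: "'a set \<Rightarrow> ('a \<times> 'a) set \<Rightarrow> bool" where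
  "is_tree V E \<longleftrightarrow> graph V E \<and> connected V E \<and> \<not> (\<exists>xs. set xs \<subseteq> V \<and> is_cycle E xs)"

definition tree_decomp ::
  "'a set \<Rightarrow> ('a \<times> 'a) set \<Rightarrow> nat set \<Rightarrow> (nat \<times> nat) set \<Rightarrow> (nat \<Rightarrow> 'a set) \<Rightarrow> bool" where
  "tree_decomp V E I F B \<longleftrightarrow> is_tree I F \<and> (\<forall>i\<in>I. B i \<subseteq> V) \<and>
     (\<forall>v\<in>V. \<exists>i\<in>I. v \<in> B i) \<and>
     (\<forall>(u, v)\<in>E. \<exists>i\<in>I. u \<in> B i \<and> v \<in> B i) \<and>
     (\<forall>v\<in>V. connected {i\<in>I. v \<in> B i} (F \<inter> ({i\<in>I. v \<in> B i} \<times> {i\<in>I. v \<in> B i})))"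

definition treewidth :: "'a set \<Rightarrow> ('a \<times> 'a) set \<Rightarrow> nat" where
  "treewidth V E = (LEAST k. \<exists>I F B. tree_decomp V E I F B \<and> k = Max (card ` B ` I) - 1)"

definition path_decomp :: "'a set \<Rightarrow> ('a \<times> 'a) set \<Rightarrow> 'a set list \<Rightarrow> bool" where
  "path_decomp V E Bs \<longleftrightarrow> Bs \<noteq> [] \<and> (\<forall>b\<in>set Bs. b \<subseteq> V) \<and>
     (\<forall>v\<in>V. \<exists>b\<in>set Bs. v \<in> b) \<and>
     (\<forall>(u, v)\<in>E. \<exists>b\<in>set Bs. u \<in> b \<and> v \<in> b) \<and>
     (\<forall>v i j k. i \<le> j \<and> j \<le> k \<and> k < length Bs \<and> v \<in> Bs ! i \<and> v \<in> Bs ! k \<longrightarrow> v \<in> Bs ! j)"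

definition pathwidth :: "'a set \<Rightarrow> ('a \<times> 'a) set \<Rightarrow> nat" where
  "pathwidth V E = (LEAST k. \<exists>Bs. path_decomp V E Bs \<and> k = Max (card ` set Bs) - 1)"

definition vertex_cover_number :: "'a set \<Rightarrow> ('a \<times> 'a) set \<Rightarrow> nat" where
  "vertex_cover_number V E = (LEAST k. \<exists>A. A \<subseteq> V \<and> card A = k \<and>
      (\<forall>u\<in>V - A. \<forall>v\<in>V - A. (u, v) \<notin> E))"

definition max_degree :: "'a set \<Rightarrow> ('a \<times> 'a) set \<Rightarrow> nat" where
  "max_degree V E = Max ((\<lambda>v. card {u\<in>V. (v, u) \<in> E}) ` V)"

definition direct_prod_edges ::
  "('a \<times> 'a) set \<Rightarrow> ('b \<times> 'b) set \<Rightarrow> (('a \<times> 'b) \<times> ('a \<times> 'b)) set" where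
  "direct_prod_edges E1 E2 = {((a, v), (b, u)). (a, b) \<in> E1 \<and> (v, u) \<in> E2}"

end

theory Submission imports Defs begin

lemma tree_add_leaf:
  assumes T: "is_tree V E" and x: "x \<notin> V" and y: "y \<in> V"
  shows "is_tree (insert x V) (E \<union> {(x,y),(y,x)})"
proof -
  have g: "finite V" "E \<subseteq> V \<times> V" "sym E" "irrefl E" using T unfolding is_tree_def graph_def by auto
  have c: "\<forall>u\<in>V. \<forall>v\<in>V. (u, v) \<in> (E \<inter> (V \<times> V))\<^sup>*" using T unfolding is_tree_def connected_def by auto
  have nc: "\<not> (\<exists>xs. set xs \<subseteq> V \<and> is_cycle E xs)" using T unfolding is_tree_def by auto
  define E' where "E' = E \<union> {(x,y),(y,x)}"
  define V' where "V' = insert x V"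
  have gr: "graph V' E'" using g x y unfolding graph_def E'_def V'_def sym_def irrefl_def by auto
  have mono: "(E \<inter> (V \<times> V))\<^sup>* \<subseteq> (E' \<inter> (V' \<times> V'))\<^sup>*"
    by (rule rtrancl_mono) (auto simp: E'_def V'_def)
  have xy: "(x,y) \<in> (E' \<inter> (V' \<times> V'))\<^sup>*" "(y,x) \<in> (E' \<inter> (V' \<times> V'))\<^sup>*"
    using y by (auto simp: E'_def V'_def)
  have con: "connected V' E'"
    unfolding connected_def
  proof (intro conjI ballI)
    show "V' \<noteq> {}" by (simp add: V'_def)
  next
    fix u v assume u: "u \<in> V'" and v: "v \<in> V'"
    have old: "\<And>u v. u \<in> V \<Longrightarrow> v \<in> V \<Longrightarrow> (u, v) \<in> (E' \<inter> (V' \<times> V'))\<^sup>*"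
      using c mono by blast
    show "(u, v) \<in> (E' \<inter> (V' \<times> V'))\<^sup>*"
    proof (cases "u = x")
      case True
      then show ?thesis
      proof (cases "v = x")
        case False
        then have "v \<in> V" using v by (simp add: V'_def)
        then show ?thesis using True xy(1) old[OF y] by (meson rtrancl_trans)
      qed simp
    next
      case False
      then have uV: "u \<in> V" using u by (simp add: V'_def)
      show ?thesis
      proof (cases "v = x")
        case True
        then show ?thesis using xy(2) old[OF uV y] by (meson rtrancl_trans)
      next
        case False
        then show ?thesis using v old[OF uV] by (simp add: V'_def)
      qed
    qed
  qed
  have key1: "\<And>a. (a, x) \<in> E' \<Longrightarrow> a = y" using g(2) x by (auto simp: E'_def)
  have key2: "\<And>b. (x, b) \<in> E' \<Longrightarrow> b = y" using g(2) x by (auto simp: E'_def)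
  have ncyc: "\<not> (\<exists>xs. set xs \<subseteq> V' \<and> is_cycle E' xs)"
  proof
    assume "\<exists>xs. set xs \<subseteq> V' \<and> is_cycle E' xs"
    then obtain xs where s: "set xs \<subseteq> V'" and cy: "is_cycle E' xs" by blast
    have L: "length xs \<ge> 3" and d: "distinct xs"
      and st: "\<And>i. i + 1 < length xs \<Longrightarrow> (xs ! i, xs ! (i + 1)) \<in> E'"
      and lh: "(last xs, hd xs) \<in> E'" using cy unfolding is_cycle_def by auto
    have ne: "xs \<noteq> []" using L by auto
    have lst: "last xs = xs ! (length xs - 1)" using ne by (simp add: last_conv_nth)
    have hdn: "hd xs = xs ! 0" using ne by (simp add: hd_conv_nth)
    show False
    proof (cases "x \<in> set xs")
      case False
      have sV: "set xs \<subseteq> V" using s False by (auto simp: V'_def)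
      have "is_cycle E xs"
        unfolding is_cycle_def
      proof (intro conjI allI impI)
        fix i assume i: "i + 1 < length xs"
        have "xs ! i \<noteq> x" "xs ! (i+1) \<noteq> x" using False i nth_mem
          by (metis Suc_eq_plus1 Suc_lessD)+
        then show "(xs ! i, xs ! (i + 1)) \<in> E" using st[OF i] by (auto simp: E'_def)
      next
        have "last xs \<noteq> x" "hd xs \<noteq> x" using False ne by auto
        then show "(last xs, hd xs) \<in> E" using lh by (auto simp: E'_def)
      qed (use L d in auto)
      then show False using nc sV by blast
    next
      case True
      then obtain k where k: "k < length xs" "xs ! k = x" by (metis in_set_conv_nth)
      have dd: "\<And>i j. i < length xs \<Longrightarrow> j < length xs \<Longrightarrow> xs ! i = xs ! j \<Longrightarrow> i = j"
        using d nth_eq_iff_index_eq by blast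
      show False
      proof (cases "k = 0")
        case True
        have a: "xs ! 1 = y" using st[of 0] L k True key2 by auto
        have b: "xs ! (length xs - 1) = y" using lh lst hdn k True key1 by auto
        have "1 = length xs - 1" using dd[of 1 "length xs - 1"] a b L by simp
        then show False using L by auto
      next
        case False
        have a: "xs ! (k-1) = y" using st[of "k-1"] False k key1 by auto
        show False
        proof (cases "k = length xs - 1")
          case True
          have b: "xs ! 0 = y" using lh lst hdn k True key2 by auto
          have "k - 1 < length xs" using k by simp
          moreover have "0 < length xs" using k(1) by linarith
          ultimately have "0 = k - 1" using dd[of 0 "k - 1"] a b by simp
          then show False using L True by auto
        next
          case False
          have b: "xs ! (k+1) = y" using st[of k] False k key2 by auto
          have "k + 1 < length xs" using k False by linarith
          then have "k - 1 = k + 1" using dd[of "k - 1" "k + 1"] a b k by simp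
          then show False by auto
        qed
      qed
    qed
  qed
  show ?thesis using gr con ncyc unfolding is_tree_def E'_def V'_def by auto
qed

lemma tree_add_leaves:
  assumes "finite S" "is_tree I F" "S \<inter> I = {}" "p ` S \<subseteq> I"
  shows "is_tree (I \<union> S) (F \<union> (\<lambda>s. (s, p s)) ` S \<union> (\<lambda>s. (p s, s)) ` S)"
  using assms(1,3,4)
proof (induction S rule: finite_induct)
  case empty
  show ?case using assms(2) by simp
next
  case (insert s S)
  have a: "S \<inter> I = {}" using insert.prems(1) by auto
  have b: "p ` S \<subseteq> I" using insert.prems(2) by auto
  have IH: "is_tree (I \<union> S) (F \<union> (\<lambda>s. (s, p s)) ` S \<union> (\<lambda>s. (p s, s)) ` S)"
    using insert.IH[OF a b] .
  have c: "s \<notin> I \<union> S" using insert.hyps(2) insert.prems(1) by auto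
  have d: "p s \<in> I \<union> S" using insert.prems(2) by auto
  have "is_tree (insert s (I \<union> S)) ((F \<union> (\<lambda>s. (s, p s)) ` S \<union> (\<lambda>s. (p s, s)) ` S) \<union> {(s, p s), (p s, s)})"
    by (rule tree_add_leaf[OF IH c d])
  moreover have "insert s (I \<union> S) = I \<union> insert s S" by auto
  moreover have "(F \<union> (\<lambda>s. (s, p s)) ` S \<union> (\<lambda>s. (p s, s)) ` S) \<union> {(s, p s), (p s, s)}
     = F \<union> (\<lambda>s. (s, p s)) ` insert s S \<union> (\<lambda>s. (p s, s)) ` insert s S" by (simp add: Un_ac)
  ultimately show ?case by metis
qed


definition nb :: "'b set \<Rightarrow> ('b \<times> 'b) set \<Rightarrow> 'b set \<Rightarrow> 'b set" where
  "nb V E X = {u\<in>V. \<exists>y\<in>X. y = u \<or> (y, u) \<in> E}"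

lemma card_nb:
  assumes "graph V E" "X \<subseteq> V"
  shows "card (nb V E X) \<le> card X * (max_degree V E + 1)"
proof -
  have fV: "finite V" using assms(1) by (simp add: graph_def)
  then have fX: "finite X" using assms(2) finite_subset by blast
  have "card (nb V E X) \<le> card (\<Union>y\<in>X. insert y {u\<in>V. (y, u) \<in> E})"
    by (rule card_mono) (use fX fV in \<open>auto simp: nb_def\<close>)
  also have "\<dots> \<le> (\<Sum>y\<in>X. card (insert y {u\<in>V. (y, u) \<in> E}))"
    by (rule card_UN_le[OF fX])
  also have "\<dots> \<le> (\<Sum>y\<in>X. max_degree V E + 1)"
  proof (rule sum_mono)
    fix y assume y: "y \<in> X"
    then have yV: "y \<in> V" using assms(2) by auto
    have "card {u\<in>V. (y, u) \<in> E} \<le> max_degree V E"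
      unfolding max_degree_def by (rule Max_ge) (use fV yV in auto)
    moreover have "card (insert y {u\<in>V. (y, u) \<in> E}) \<le> Suc (card {u\<in>V. (y, u) \<in> E})"
      using fV by (simp add: card_insert_if)
    ultimately show "card (insert y {u\<in>V. (y, u) \<in> E}) \<le> max_degree V E + 1" by simp
  qed
  also have "\<dots> = card X * (max_degree V E + 1)" by simp
  finally show ?thesis .
qed

lemma conn_union:
  assumes C: "connected C (R \<inter> C \<times> C)"
    and T: "\<And>y. y \<in> Y \<Longrightarrow> connected (T y) (R \<inter> (T y \<times> T y)) \<and> T y \<inter> C \<noteq> {}"
    and U: "U = C \<union> (\<Union>y\<in>Y. T y)"
  shows "connected U (R \<inter> U \<times> U)"
proof -
  have mono: "\<And>X. X \<subseteq> U \<Longrightarrow> (R \<inter> X \<times> X)\<^sup>* \<subseteq> (R \<inter> U \<times> U \<inter> U \<times> U)\<^sup>*"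
    by (rule rtrancl_mono) auto
  have Cc: "\<And>a b. a \<in> C \<Longrightarrow> b \<in> C \<Longrightarrow> (a, b) \<in> (R \<inter> U \<times> U \<inter> U \<times> U)\<^sup>*"
  proof -
    fix a b assume "a \<in> C" "b \<in> C"
    then have "(a, b) \<in> (R \<inter> C \<times> C \<inter> C \<times> C)\<^sup>*" using C unfolding connected_def by blast
    moreover have "(R \<inter> C \<times> C \<inter> C \<times> C) = R \<inter> C \<times> C" by auto
    ultimately show "(a, b) \<in> (R \<inter> U \<times> U \<inter> U \<times> U)\<^sup>*" using mono[of C] U by auto
  qed
  have Tc: "\<And>y a b. y \<in> Y \<Longrightarrow> a \<in> T y \<Longrightarrow> b \<in> T y \<Longrightarrow> (a, b) \<in> (R \<inter> U \<times> U \<inter> U \<times> U)\<^sup>*"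
  proof -
    fix y a b assume y: "y \<in> Y" and "a \<in> T y" "b \<in> T y"
    then have "(a, b) \<in> (R \<inter> (T y \<times> T y) \<inter> (T y \<times> T y))\<^sup>*" using T[OF y] unfolding connected_def by blast
    moreover have "(R \<inter> (T y \<times> T y) \<inter> (T y \<times> T y)) = R \<inter> (T y \<times> T y)" by auto
    moreover have "T y \<subseteq> U" using U y by auto
    ultimately show "(a, b) \<in> (R \<inter> U \<times> U \<inter> U \<times> U)\<^sup>*" using mono[of "T y"] by auto
  qed
  have toC: "\<And>u c. u \<in> U \<Longrightarrow> c \<in> C \<Longrightarrow> (u, c) \<in> (R \<inter> U \<times> U \<inter> U \<times> U)\<^sup>*"
  proof -
    fix u c assume u: "u \<in> U" and c: "c \<in> C"
    show "(u, c) \<in> (R \<inter> U \<times> U \<inter> U \<times> U)\<^sup>*"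
    proof (cases "u \<in> C")
      case True then show ?thesis using Cc c by blast
    next
      case False
      then obtain y where y: "y \<in> Y" "u \<in> T y" using u U by auto
      then obtain z where z: "z \<in> T y" "z \<in> C" using T[OF y(1)] by blast
      show ?thesis using Tc[OF y z(1)] Cc[OF z(2) c] by (meson rtrancl_trans)
    qed
  qed
  have fromC: "\<And>u c. u \<in> U \<Longrightarrow> c \<in> C \<Longrightarrow> (c, u) \<in> (R \<inter> U \<times> U \<inter> U \<times> U)\<^sup>*"
  proof -
    fix u c assume u: "u \<in> U" and c: "c \<in> C"
    show "(c, u) \<in> (R \<inter> U \<times> U \<inter> U \<times> U)\<^sup>*"
    proof (cases "u \<in> C")
      case True then show ?thesis using Cc c by blast
    next
      case False
      then obtain y where y: "y \<in> Y" "u \<in> T y" using u U by auto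
      then obtain z where z: "z \<in> T y" "z \<in> C" using T[OF y(1)] by blast
      show ?thesis using Tc[OF y(1) z(1) y(2)] Cc[OF c z(2)] by (meson rtrancl_trans)
    qed
  qed
  obtain c where c: "c \<in> C" using C unfolding connected_def by auto
  show ?thesis unfolding connected_def
  proof (intro conjI ballI)
    show "U \<noteq> {}" using c U by auto
  next
    fix u v assume "u \<in> U" "v \<in> U"
    then show "(u, v) \<in> (R \<inter> U \<times> U \<inter> U \<times> U)\<^sup>*" using toC fromC c by (meson rtrancl_trans)
  qed
qed

lemma conn_leaves:
  assumes C: "connected J (F \<inter> J \<times> J)"
    and J': "J' = J \<union> {s\<in>S. p s \<in> J}"
    and F': "F \<union> (\<lambda>s. (s, p s)) ` S \<union> (\<lambda>s. (p s, s)) ` S \<subseteq> F'"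
  shows "connected J' (F' \<inter> J' \<times> J')"
proof -
  let ?R = "(F' \<inter> J' \<times> J' \<inter> J' \<times> J')\<^sup>*"
  have Jc: "\<And>a b. a \<in> J \<Longrightarrow> b \<in> J \<Longrightarrow> (a, b) \<in> ?R"
  proof -
    fix a b assume "a \<in> J" "b \<in> J"
    then have "(a, b) \<in> (F \<inter> J \<times> J \<inter> J \<times> J)\<^sup>*" using C unfolding connected_def by blast
    moreover have "(F \<inter> J \<times> J \<inter> J \<times> J)\<^sup>* \<subseteq> ?R"
      by (rule rtrancl_mono) (use J' F' in auto)
    ultimately show "(a, b) \<in> ?R" by auto
  qed
  have toJ: "\<And>u. u \<in> J' \<Longrightarrow> \<exists>c\<in>J. (u, c) \<in> ?R \<and> (c, u) \<in> ?R"
  proof -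
    fix u assume u: "u \<in> J'"
    show "\<exists>c\<in>J. (u, c) \<in> ?R \<and> (c, u) \<in> ?R"
    proof (cases "u \<in> J")
      case True then show ?thesis by blast
    next
      case False
      then have u': "u \<in> S" "p u \<in> J" using u J' by auto
      have "(u, p u) \<in> F' \<inter> J' \<times> J' \<inter> J' \<times> J'" "(p u, u) \<in> F' \<inter> J' \<times> J' \<inter> J' \<times> J'"
        using u' u J' F' by auto
      then show ?thesis using u' by blast
    qed
  qed
  obtain c where c: "c \<in> J" using C unfolding connected_def by auto
  show ?thesis unfolding connected_def
  proof (intro conjI ballI)
    show "J' \<noteq> {}" using c J' by auto
  next
    fix u v assume u: "u \<in> J'" and v: "v \<in> J'"
    obtain a where a: "a \<in> J" "(u, a) \<in> ?R" using toJ[OF u] by blast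
    obtain b where b: "b \<in> J" "(b, v) \<in> ?R" using toJ[OF v] by blast
    show "(u, v) \<in> ?R" using a b Jc[OF a(1) b(1)] by (meson rtrancl_trans)
  qed
qed

lemma td_finite_ne:
  assumes "tree_decomp V E I F B" shows "finite I" "I \<noteq> {}"
  using assms unfolding tree_decomp_def is_tree_def graph_def connected_def by auto

lemma dpe_mem: "((a, v), (b, u)) \<in> direct_prod_edges E1 E2 \<longleftrightarrow> (a, b) \<in> E1 \<and> (v, u) \<in> E2"
  by (simp add: direct_prod_edges_def)


lemma tw_bound:
  fixes V1 :: "'a set" and V2 :: "'b set"
  assumes G1: "graph V1 E1" and G2: "graph V2 E2"
    and AV: "A \<subseteq> V1" and Acov: "\<forall>u\<in>V1 - A. \<forall>v\<in>V1 - A. (u, v) \<notin> E1"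
    and td: "tree_decomp V2 E2 I F B"
    and wB: "\<forall>i\<in>I. card (B i) \<le> K"
  shows "\<exists>I' F' B'. tree_decomp (V1 \<times> V2) (direct_prod_edges E1 E2) I' F' B' \<and>
           (\<forall>j\<in>I'. card (B' j) \<le> card A * K * (max_degree V2 E2 + 1) + 1)"
proof -
  have fV1: "finite V1" and E1sub: "E1 \<subseteq> V1 \<times> V1" using G1 by (auto simp: graph_def)
  have fV2: "finite V2" and E2sub: "E2 \<subseteq> V2 \<times> V2" and symE2: "sym E2" using G2 by (auto simp: graph_def)
  have tree: "is_tree I F" and BV: "\<forall>i\<in>I. B i \<subseteq> V2" and cov: "\<forall>v\<in>V2. \<exists>i\<in>I. v \<in> B i"
    and ecov: "\<forall>(u, v)\<in>E2. \<exists>i\<in>I. u \<in> B i \<and> v \<in> B i"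
    and tconn: "\<forall>v\<in>V2. connected {i\<in>I. v \<in> B i} (F \<inter> ({i\<in>I. v \<in> B i} \<times> {i\<in>I. v \<in> B i}))"
    using td unfolding tree_decomp_def by auto
  have fI: "finite I" using td_finite_ne[OF td] by simp
  define NV where "NV = (V1 - A) \<times> V2"
  have fNV: "finite NV" using fV1 fV2 by (simp add: NV_def)
  obtain Lst where dL: "distinct Lst" and sL: "set Lst = NV" using finite_distinct_list[OF fNV] by metis
  define N where "N = length Lst"
  define C where "C i = A \<times> nb V2 E2 (B i)" for i
  define sel where "sel v = (SOME i. i \<in> I \<and> v \<in> B i)" for v
  have sel: "sel v \<in> I \<and> v \<in> B (sel v)" if "v \<in> V2" for v
  proof -
    have "\<exists>i. i \<in> I \<and> v \<in> B i" using cov that by auto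
    then show ?thesis unfolding sel_def by (rule someI_ex)
  qed
  define c where "c = Suc (Max I)"
  define enc where "enc i t = c + i * N + t" for i t
  define S where "S = (\<lambda>(i, t). enc i t) ` (I \<times> {..<N})"
  define p where "p s = (s - c) div N" for s
  define B' where "B' j = (if j \<in> I then C j else
      (if sel (snd (Lst ! ((j - c) mod N))) = p j then insert (Lst ! ((j - c) mod N)) (C (p j)) else C (p j)))" for j
  have dec: "p (enc i t) = i \<and> (enc i t - c) mod N = t" if "t < N" for i t
  proof -
    have "enc i t - c = t + N * i" unfolding enc_def by simp
    then show ?thesis unfolding p_def using that by simp
  qed
  have notI: "enc i t \<notin> I" for i t
  proof
    assume "enc i t \<in> I"
    then have "enc i t \<le> Max I" using fI by simp
    then show False unfolding enc_def c_def by simp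
  qed
  have B'S: "B' (enc i t) = (if sel (snd (Lst ! t)) = i then insert (Lst ! t) (C i) else C i)" if "t < N" for i t
    using dec[OF that] notI unfolding B'_def by simp
  have B'I: "B' i = C i" if "i \<in> I" for i using that by (simp add: B'_def)
  have fS: "finite S" unfolding S_def using fI by simp
  have SI: "S \<inter> I = {}" unfolding S_def using notI by auto
  have pS: "p ` S \<subseteq> I" unfolding S_def using dec by auto
  have Sobt: "\<exists>i t. i \<in> I \<and> t < N \<and> s = enc i t" if "s \<in> S" for s using that unfolding S_def by auto
  have encS: "enc i t \<in> S" if "i \<in> I" "t < N" for i t using that unfolding S_def by auto
  define I' where "I' = I \<union> S"
  define F' where "F' = F \<union> (\<lambda>s. (s, p s)) ` S \<union> (\<lambda>s. (p s, s)) ` S"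
  have tree': "is_tree I' F'" unfolding I'_def F'_def by (rule tree_add_leaves[OF fS tree SI pS])
  have LNV: "Lst ! t \<in> NV" if "t < N" for t using that sL N_def nth_mem by blast
  have Csub: "C i \<subseteq> V1 \<times> V2" for i using AV unfolding C_def nb_def by auto
  have bag_sub: "\<forall>j\<in>I'. B' j \<subseteq> V1 \<times> V2"
  proof
    fix j assume j: "j \<in> I'"
    show "B' j \<subseteq> V1 \<times> V2"
    proof (cases "j \<in> I")
      case True then show ?thesis using B'I Csub by simp
    next
      case False
      then obtain i t where it: "i \<in> I" "t < N" "j = enc i t" using j Sobt unfolding I'_def by blast
      have "Lst ! t \<in> V1 \<times> V2" using LNV[OF it(2)] unfolding NV_def by auto
      then show ?thesis using it B'S Csub by simp
    qed
  qed
  have memA: "(a, w) \<in> B' j \<longleftrightarrow> (a, w) \<in> C (if j \<in> I then j else p j)"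
    if j: "j \<in> I'" and a: "a \<in> A" for j a w
  proof (cases "j \<in> I")
    case True then show ?thesis using B'I by simp
  next
    case False
    then obtain i t where it: "i \<in> I" "t < N" "j = enc i t" using j Sobt unfolding I'_def by blast
    have "(a, w) \<noteq> Lst ! t" using LNV[OF it(2)] a unfolding NV_def by auto
    then show ?thesis using it B'S dec False by simp
  qed
  have memN: "\<exists>i t. i \<in> I \<and> t < N \<and> j = enc i t \<and> Lst ! t = x \<and> sel (snd x) = i"
    if j: "j \<in> I'" and x: "x \<in> NV" and xin: "x \<in> B' j" for j x
  proof (cases "j \<in> I")
    case True
    then show ?thesis using xin x B'I unfolding C_def NV_def by auto
  next
    case False
    then obtain i t where it: "i \<in> I" "t < N" "j = enc i t" using j Sobt unfolding I'_def by blast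
    have "x \<notin> C i" using x unfolding C_def NV_def by auto
    then have "sel (snd (Lst ! t)) = i \<and> Lst ! t = x" using xin it B'S
      by (cases "sel (snd (Lst ! t)) = i") auto
    then show ?thesis using it by blast
  qed
  have inC: "(a, w) \<in> C i" if "a \<in> A" "w \<in> B i" "i \<in> I" for a w i
    using that BV unfolding C_def nb_def by auto
  have nbE: "u \<in> nb V2 E2 (B i)" if "v \<in> B i" "(v, u) \<in> E2" for u v i
    using that E2sub unfolding nb_def by auto
  have covN: "\<exists>j\<in>I'. x \<in> B' j \<and> (\<forall>y. (snd x, y) \<in> E2 \<longrightarrow> (\<forall>b\<in>A. (b, y) \<in> B' j))"
    if x: "x \<in> NV" for x
  proof -
    obtain a w where aw: "x = (a, w)" by (cases x)
    have w: "w \<in> V2" using x aw unfolding NV_def by auto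
    obtain t where t: "t < N" "Lst ! t = x" using x sL N_def by (metis in_set_conv_nth)
    let ?i = "sel w"
    have i: "?i \<in> I" "w \<in> B ?i" using sel[OF w] by auto
    have "B' (enc ?i t) = insert x (C ?i)" using B'S[OF t(1)] t aw by simp
    moreover have "\<forall>y. (w, y) \<in> E2 \<longrightarrow> (\<forall>b\<in>A. (b, y) \<in> C ?i)"
      using nbE[OF i(2)] unfolding C_def by auto
    ultimately show ?thesis using encS[OF i(1) t(1)] aw unfolding I'_def by auto
  qed
  have td': "tree_decomp (V1 \<times> V2) (direct_prod_edges E1 E2) I' F' B'"
    unfolding tree_decomp_def
  proof (intro conjI)
    show "is_tree I' F'" by (rule tree')
    show "\<forall>i\<in>I'. B' i \<subseteq> V1 \<times> V2" by (rule bag_sub)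
    show "\<forall>v\<in>V1 \<times> V2. \<exists>i\<in>I'. v \<in> B' i"
    proof
      fix x assume x: "x \<in> V1 \<times> V2"
      obtain a w where aw: "x = (a, w)" by (cases x)
      show "\<exists>i\<in>I'. x \<in> B' i"
      proof (cases "a \<in> A")
        case True
        have w: "w \<in> V2" using x aw by auto
        have "x \<in> B' (sel w)" using sel[OF w] inC[OF True] B'I aw by simp
        then show ?thesis using sel[OF w] unfolding I'_def by blast
      next
        case False
        then have "x \<in> NV" using x aw unfolding NV_def by auto
        then show ?thesis using covN by blast
      qed
    qed
    show "\<forall>(u, v)\<in>direct_prod_edges E1 E2. \<exists>i\<in>I'. u \<in> B' i \<and> v \<in> B' i"
    proof (clarify)
      fix a v b u assume e: "((a, v), (b, u)) \<in> direct_prod_edges E1 E2"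
      then have ab: "(a, b) \<in> E1" and vu: "(v, u) \<in> E2" by (auto simp: dpe_mem)
      have abV: "a \<in> V1" "b \<in> V1" using ab E1sub by auto
      have vuV: "v \<in> V2" "u \<in> V2" using vu E2sub by auto
      have uv: "(u, v) \<in> E2" using vu symE2 by (auto simp: sym_def)
      show "\<exists>i\<in>I'. (a, v) \<in> B' i \<and> (b, u) \<in> B' i"
      proof (cases "a \<in> A")
        case aA: True
        show ?thesis
        proof (cases "b \<in> A")
          case True
          obtain i where i: "i \<in> I" "v \<in> B i" "u \<in> B i" using ecov vu by blast
          have "(a, v) \<in> B' i" "(b, u) \<in> B' i" using inC[OF aA i(2,1)] inC[OF True i(3,1)] B'I[OF i(1)] by auto
          moreover have "i \<in> I'" using i unfolding I'_def by auto
          ultimately show ?thesis by blast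
        next
          case False
          then have "(b, u) \<in> NV" using abV vuV unfolding NV_def by auto
          then show ?thesis using covN[of "(b, u)"] uv aA by auto
        qed
      next
        case False
        then have "(a, v) \<in> NV" using abV vuV unfolding NV_def by auto
        moreover have "b \<in> A" using False Acov abV ab by blast
        ultimately show ?thesis using covN[of "(a, v)"] vu by auto
      qed
    qed
    show "\<forall>v\<in>V1 \<times> V2. connected {i\<in>I'. v \<in> B' i} (F' \<inter> ({i\<in>I'. v \<in> B' i} \<times> {i\<in>I'. v \<in> B' i}))"
    proof
      fix x assume x: "x \<in> V1 \<times> V2"
      obtain a w where aw: "x = (a, w)" by (cases x)
      have w: "w \<in> V2" using x aw by auto
      show "connected {i\<in>I'. x \<in> B' i} (F' \<inter> ({i\<in>I'. x \<in> B' i} \<times> {i\<in>I'. x \<in> B' i}))"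
      proof (cases "a \<in> A")
        case True
        define J where "J = {i\<in>I. w \<in> nb V2 E2 (B i)}"
        have H: "\<And>j. j \<in> I' \<Longrightarrow> x \<in> B' j \<longleftrightarrow> w \<in> nb V2 E2 (B (if j \<in> I then j else p j))"
          using memA True aw unfolding C_def by auto
        have Jeq: "{i\<in>I'. x \<in> B' i} = J \<union> {s\<in>S. p s \<in> J}"
        proof (rule set_eqI)
          fix j
          show "j \<in> {i\<in>I'. x \<in> B' i} \<longleftrightarrow> j \<in> J \<union> {s\<in>S. p s \<in> J}"
          proof (cases "j \<in> I")
            case True
            have "j \<notin> S" using SI True by blast
            then show ?thesis using H[of j] True unfolding J_def I'_def by auto
          next
            case False
            have "j \<in> S \<Longrightarrow> p j \<in> I" using pS by blast
            then show ?thesis using H[of j] False unfolding J_def I'_def by auto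
          qed
        qed
        have Jc: "connected J (F \<inter> J \<times> J)"
        proof (rule conn_union[where Y = "{y\<in>V2. (y, w) \<in> E2}" and T = "\<lambda>y. {i\<in>I. y \<in> B i}"])
          show "connected {i\<in>I. w \<in> B i} (F \<inter> {i\<in>I. w \<in> B i} \<times> {i\<in>I. w \<in> B i})"
            using tconn w by auto
        next
          fix y assume y: "y \<in> {y\<in>V2. (y, w) \<in> E2}"
          have "connected {i\<in>I. y \<in> B i} (F \<inter> {i\<in>I. y \<in> B i} \<times> {i\<in>I. y \<in> B i})"
            using tconn y by auto
          moreover have "{i\<in>I. y \<in> B i} \<inter> {i\<in>I. w \<in> B i} \<noteq> {}" using ecov y by blast
          ultimately show "connected {i\<in>I. y \<in> B i} (F \<inter> ({i\<in>I. y \<in> B i} \<times> {i\<in>I. y \<in> B i})) \<and>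
            {i\<in>I. y \<in> B i} \<inter> {i\<in>I. w \<in> B i} \<noteq> {}" by simp
        next
          show "J = {i\<in>I. w \<in> B i} \<union> (\<Union>y\<in>{y\<in>V2. (y, w) \<in> E2}. {i\<in>I. y \<in> B i})"
            unfolding J_def nb_def using w E2sub by auto
        qed
        show ?thesis using conn_leaves[OF Jc Jeq] unfolding F'_def by blast
      next
        case False
        have xNV: "x \<in> NV" using x aw False unfolding NV_def by auto
        let ?J = "{i\<in>I'. x \<in> B' i}"
        obtain j0 where j0: "j0 \<in> ?J" using covN[OF xNV] by blast
        have single: "j = j0" if "j \<in> ?J" for j
        proof -
          have all: "\<And>j. j \<in> ?J \<Longrightarrow> j = enc (sel (snd x)) (THE t. t < N \<and> Lst ! t = x)"
          proof -
            fix j assume "j \<in> ?J"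
            then obtain i t where it: "i \<in> I" "t < N" "j = enc i t" "Lst ! t = x" "sel (snd x) = i"
              using memN xNV by blast
            have "(THE t. t < N \<and> Lst ! t = x) = t"
            proof (rule the_equality)
              show "t < N \<and> Lst ! t = x" using it by simp
            next
              fix t' assume "t' < N \<and> Lst ! t' = x"
              then show "t' = t" using it dL N_def nth_eq_iff_index_eq by metis
            qed
            then show "j = enc (sel (snd x)) (THE t. t < N \<and> Lst ! t = x)" using it by simp
          qed
          show ?thesis using all[OF that] all[OF j0] by simp
        qed
        have "?J = {j0}" using j0 single by blast
        then show ?thesis unfolding connected_def by auto
      qed
    qed
  qed
  have width: "\<forall>j\<in>I'. card (B' j) \<le> card A * K * (max_degree V2 E2 + 1) + 1"
  proof
    fix j assume j: "j \<in> I'"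
    have Cw: "card (C i) \<le> card A * K * (max_degree V2 E2 + 1)" if i: "i \<in> I" for i
    proof -
      have "card (C i) = card A * card (nb V2 E2 (B i))"
        unfolding C_def by (simp add: card_cartesian_product)
      also have "\<dots> \<le> card A * (card (B i) * (max_degree V2 E2 + 1))"
        using card_nb[OF G2] BV i by (simp add: mult_le_mono2)
      also have "\<dots> \<le> card A * (K * (max_degree V2 E2 + 1))"
        using wB i by (intro mult_le_mono2 mult_le_mono1) simp
      finally show ?thesis by (simp only: mult.assoc)
    qed
    have fC: "finite (C i)" for i
      using fV1 fV2 AV finite_subset Csub by (meson finite_SigmaI)
    show "card (B' j) \<le> card A * K * (max_degree V2 E2 + 1) + 1"
    proof (cases "j \<in> I")
      case True then show ?thesis using Cw B'I by fastforce
    next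
      case False
      then obtain i t where it: "i \<in> I" "t < N" "j = enc i t" using j Sobt unfolding I'_def by blast
      have "card (insert (Lst ! t) (C i)) \<le> Suc (card (C i))" using fC by (simp add: card_insert_if)
      then show ?thesis using B'S[OF it(2)] it Cw[OF it(1)] by (cases "sel (snd (Lst ! t)) = i") auto
    qed
  qed
  show ?thesis using td' width by blast
qed


lemma pw_bound:
  fixes V1 :: "'a set" and V2 :: "'b set"
  assumes G1: "graph V1 E1" and G2: "graph V2 E2"
    and AV: "A \<subseteq> V1" and Acov: "\<forall>u\<in>V1 - A. \<forall>v\<in>V1 - A. (u, v) \<notin> E1"
    and pd: "path_decomp V2 E2 Bs"
    and wB: "\<forall>b\<in>set Bs. card b \<le> K"
  shows "\<exists>Bs'. path_decomp (V1 \<times> V2) (direct_prod_edges E1 E2) Bs' \<and>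
           (\<forall>b\<in>set Bs'. card b \<le> card A * K * (max_degree V2 E2 + 1) + 1)"
proof -
  have fV1: "finite V1" and E1sub: "E1 \<subseteq> V1 \<times> V1" using G1 by (auto simp: graph_def)
  have fV2: "finite V2" and E2sub: "E2 \<subseteq> V2 \<times> V2" and symE2: "sym E2" using G2 by (auto simp: graph_def)
  have pdu: "Bs \<noteq> [] \<and> (\<forall>b\<in>set Bs. b \<subseteq> V2) \<and> (\<forall>v\<in>V2. \<exists>b\<in>set Bs. v \<in> b) \<and>
     (\<forall>(u, v)\<in>E2. \<exists>b\<in>set Bs. u \<in> b \<and> v \<in> b) \<and>
     (\<forall>v i j k. i \<le> j \<and> j \<le> k \<and> k < length Bs \<and> v \<in> Bs ! i \<and> v \<in> Bs ! k \<longrightarrow> v \<in> Bs ! j)"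
    using pd unfolding path_decomp_def .
  have ne: "Bs \<noteq> []" using pdu by (rule conjunct1)
  have BV: "\<forall>b\<in>set Bs. b \<subseteq> V2" using pdu[THEN conjunct2] by (rule conjunct1)
  have cov: "\<forall>v\<in>V2. \<exists>b\<in>set Bs. v \<in> b" using pdu[THEN conjunct2, THEN conjunct2] by (rule conjunct1)
  have ecov: "\<forall>(u, v)\<in>E2. \<exists>b\<in>set Bs. u \<in> b \<and> v \<in> b" using pdu[THEN conjunct2, THEN conjunct2, THEN conjunct2] by (rule conjunct1)
  have contig0: "\<forall>v i j k. i \<le> j \<and> j \<le> k \<and> k < length Bs \<and> v \<in> Bs ! i \<and> v \<in> Bs ! k \<longrightarrow> v \<in> Bs ! j"
    using pdu[THEN conjunct2, THEN conjunct2, THEN conjunct2] by (rule conjunct2)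
  have contig: "v \<in> Bs ! j" if "i \<le> j" "j \<le> k" "k < length Bs" "v \<in> Bs ! i" "v \<in> Bs ! k" for v i j k
    using contig0 that by blast
  define n where "n = length Bs"
  have n: "0 < n" using ne n_def by simp
  have BVj: "Bs ! j \<subseteq> V2" if "j < n" for j using BV nth_mem[of j Bs] that unfolding n_def by blast
  have wBj: "card (Bs ! j) \<le> K" if "j < n" for j using wB nth_mem[of j Bs] that unfolding n_def by blast
  have ecovI: "\<exists>j<n. u \<in> Bs ! j \<and> v \<in> Bs ! j" if uv: "(u, v) \<in> E2" for u v
  proof -
    have "\<exists>b\<in>set Bs. u \<in> b \<and> v \<in> b" using bspec[OF ecov uv] by simp
    then obtain j where "j < length Bs" "u \<in> Bs ! j" "v \<in> Bs ! j" by (auto simp: in_set_conv_nth)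
    then show ?thesis unfolding n_def by blast
  qed
  define NV where "NV = (V1 - A) \<times> V2"
  have fNV: "finite NV" using fV1 fV2 by (simp add: NV_def)
  obtain Lst where dL: "distinct Lst" and sL: "set Lst = NV" using finite_distinct_list[OF fNV] by metis
  define N where "N = length Lst"
  define M where "M = Suc N"
  define C where "C j = A \<times> nb V2 E2 (Bs ! j)" for j
  define sel where "sel v = (SOME j. j < n \<and> v \<in> Bs ! j)" for v
  have sel: "sel v < n \<and> v \<in> Bs ! (sel v)" if "v \<in> V2" for v
  proof -
    have "\<exists>b\<in>set Bs. v \<in> b" using bspec[OF cov that] .
    then obtain j where "j < length Bs" "v \<in> Bs ! j" by (auto simp: in_set_conv_nth)
    then have "\<exists>j. j < n \<and> v \<in> Bs ! j" unfolding n_def by blast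
    then show ?thesis unfolding sel_def by (rule someI_ex)
  qed
  define f where "f k = (if k mod M = 0 then C (k div M) else
      if sel (snd (Lst ! (k mod M - 1))) = k div M then insert (Lst ! (k mod M - 1)) (C (k div M)) else C (k div M))" for k
  define Bs' where "Bs' = map f [0..<n * M]"
  have lenBs': "length Bs' = n * M" by (simp add: Bs'_def)
  have nthBs': "Bs' ! k = f k" if "k < n * M" for k using that by (simp add: Bs'_def)
  have inBs': "f k \<in> set Bs'" if "k < n * M" for k using that by (simp add: Bs'_def)
  have kdiv: "k div M < n" if "k < n * M" for k using that by (simp add: less_mult_imp_div_less)
  have LNV: "Lst ! t \<in> NV" if "t < N" for t using that sL nth_mem[of t Lst] unfolding N_def by blast
  have modM: "k mod M - 1 < N" if "k mod M \<noteq> 0" for k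
  proof -
    have "k mod M < M" unfolding M_def by simp
    then show ?thesis using that unfolding M_def by linarith
  qed
  have Csub: "C j \<subseteq> V1 \<times> V2" for j using AV unfolding C_def nb_def by auto
  have fsub: "f k \<subseteq> V1 \<times> V2" for k
  proof (cases "k mod M = 0")
    case True then show ?thesis using Csub by (simp add: f_def)
  next
    case False
    have "Lst ! (k mod M - 1) \<in> V1 \<times> V2" using LNV[OF modM[OF False]] unfolding NV_def by auto
    then show ?thesis using Csub False by (simp add: f_def)
  qed
  have memA: "(a, w) \<in> f k \<longleftrightarrow> (a, w) \<in> C (k div M)" if a: "a \<in> A" for k a w
  proof (cases "k mod M = 0")
    case True then show ?thesis by (simp add: f_def)
  next
    case False
    have "(a, w) \<noteq> Lst ! (k mod M - 1)" using LNV[OF modM[OF False]] a unfolding NV_def by auto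
    then show ?thesis using False by (simp add: f_def)
  qed
  have memN: "k mod M \<noteq> 0 \<and> Lst ! (k mod M - 1) = x \<and> sel (snd x) = k div M"
    if x: "x \<in> NV" and xin: "x \<in> f k" for k x
  proof (cases "k mod M = 0")
    case True
    then show ?thesis using xin x unfolding f_def C_def NV_def by auto
  next
    case False
    have "x \<notin> C (k div M)" using x unfolding C_def NV_def by auto
    then show ?thesis using xin False unfolding f_def
      by (cases "sel (snd (Lst ! (k mod M - 1))) = k div M") auto
  qed
  have inC: "(a, w) \<in> C j" if "a \<in> A" "w \<in> Bs ! j" "j < n" for a w j
    using that BVj unfolding C_def nb_def by auto
  have nbE: "u \<in> nb V2 E2 (Bs ! j)" if "v \<in> Bs ! j" "(v, u) \<in> E2" for u v j
    using that E2sub unfolding nb_def by auto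
  have Mpos: "0 < M" unfolding M_def by simp
  have posA: "f (j * M) = C j" for j
  proof -
    have "(j * M) mod M = 0" "(j * M) div M = j" using Mpos by simp_all
    then show ?thesis unfolding f_def by simp
  qed
  have jM: "j * M < n * M" if "j < n" for j using that Mpos by simp
  have covN: "\<exists>k<n * M. x \<in> f k \<and> (\<forall>y. (snd x, y) \<in> E2 \<longrightarrow> (\<forall>b\<in>A. (b, y) \<in> f k))"
    if x: "x \<in> NV" for x
  proof -
    obtain a w where aw: "x = (a, w)" by (cases x)
    have w: "w \<in> V2" using x aw unfolding NV_def by auto
    obtain t where t: "t < N" "Lst ! t = x" using x sL N_def by (metis in_set_conv_nth)
    let ?j = "sel w"
    have j: "?j < n" "w \<in> Bs ! ?j" using sel[OF w] by auto
    define k where "k = ?j * M + Suc t"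
    have tM: "Suc t < M" using t unfolding M_def by simp
    have ke: "k = Suc t + ?j * M" unfolding k_def by simp
    have kmod: "k mod M = Suc t" unfolding ke using tM by simp
    have kdv: "k div M = ?j" unfolding ke using tM Mpos div_mult_self2[of M "Suc t" ?j] by (simp add: mult.commute)
    have "k < ?j * M + M" unfolding k_def using tM by simp
    also have "\<dots> = Suc ?j * M" by simp
    also have "\<dots> \<le> n * M" using j(1) by (intro mult_le_mono1) simp
    finally have kn: "k < n * M" .
    have "f k = insert x (C ?j)" unfolding f_def using kmod kdv t aw by simp
    moreover have "\<forall>y. (w, y) \<in> E2 \<longrightarrow> (\<forall>b\<in>A. (b, y) \<in> C ?j)"
      using nbE[OF j(2)] unfolding C_def by auto
    ultimately show ?thesis using kn aw by auto
  qed
  have blk: "w \<in> nb V2 E2 (Bs ! j)"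
    if ij: "i \<le> j" "j \<le> k" "k < n" and w: "w \<in> V2"
      and wi: "w \<in> nb V2 E2 (Bs ! i)" and wk: "w \<in> nb V2 E2 (Bs ! k)" for i j k w
  proof -
    obtain y1 where y1: "y1 \<in> Bs ! i" "y1 = w \<or> (y1, w) \<in> E2" using wi unfolding nb_def by auto
    obtain y2 where y2: "y2 \<in> Bs ! k" "y2 = w \<or> (y2, w) \<in> E2" using wk unfolding nb_def by auto
    obtain m1 where m1: "m1 < n" "y1 \<in> Bs ! m1" "w \<in> Bs ! m1"
    proof (cases "y1 = w")
      case True then show ?thesis using that[of i] y1 ij by auto
    next
      case False then have "(y1, w) \<in> E2" using y1 by auto
      then show ?thesis using ecovI that by blast
    qed
    obtain m2 where m2: "m2 < n" "y2 \<in> Bs ! m2" "w \<in> Bs ! m2"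
    proof (cases "y2 = w")
      case True then show ?thesis using that[of k] y2 ij by auto
    next
      case False then have "(y2, w) \<in> E2" using y2 by auto
      then show ?thesis using ecovI that by blast
    qed
    have cg: "v \<in> Bs ! b" if "a \<le> b" "b \<le> c" "c < n" "v \<in> Bs ! a" "v \<in> Bs ! c" for a b c v
      using contig that n_def by blast
    have cg': "v \<in> Bs ! b" if "a < n" "c < n" "min a c \<le> b" "b \<le> max a c" "v \<in> Bs ! a" "v \<in> Bs ! c" for a b c v
    proof (cases "a \<le> c")
      case True then show ?thesis using cg[of a b c v] that by auto
    next
      case False then show ?thesis using cg[of c b a v] that by auto
    qed
    have yinB: "y \<in> Bs ! j \<Longrightarrow> (y = w \<or> (y, w) \<in> E2) \<Longrightarrow> w \<in> nb V2 E2 (Bs ! j)" for y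
      using w symE2 unfolding nb_def sym_def by blast
    show ?thesis
    proof (cases "j \<le> m1")
      case True
      then have "y1 \<in> Bs ! j" using cg'[of i m1 j y1] ij m1 y1 by auto
      then show ?thesis using yinB y1 by blast
    next
      case c1: False
      show ?thesis
      proof (cases "m2 \<le> j")
        case True
        then have "y2 \<in> Bs ! j" using cg'[of k m2 j y2] ij m2 y2 by auto
        then show ?thesis using yinB y2 by blast
      next
        case False
        then have "w \<in> Bs ! j" using cg'[of m1 m2 j w] c1 m1 m2 by auto
        then show ?thesis using yinB by blast
      qed
    qed
  qed
  have pd': "path_decomp (V1 \<times> V2) (direct_prod_edges E1 E2) Bs'"
    unfolding path_decomp_def
  proof (intro conjI)
    show "Bs' \<noteq> []" using n lenBs' unfolding M_def by auto
    show "\<forall>b\<in>set Bs'. b \<subseteq> V1 \<times> V2" using fsub by (auto simp: Bs'_def)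
    show "\<forall>v\<in>V1 \<times> V2. \<exists>b\<in>set Bs'. v \<in> b"
    proof
      fix x assume x: "x \<in> V1 \<times> V2"
      obtain a w where aw: "x = (a, w)" by (cases x)
      show "\<exists>b\<in>set Bs'. x \<in> b"
      proof (cases "a \<in> A")
        case True
        have w: "w \<in> V2" using x aw by auto
        have "x \<in> f (sel w * M)" using sel[OF w] inC[OF True] posA aw by simp
        then show ?thesis using inBs'[OF jM] sel[OF w] by blast
      next
        case False
        then have "x \<in> NV" using x aw unfolding NV_def by auto
        then show ?thesis using covN inBs' by blast
      qed
    qed
    show "\<forall>(u, v)\<in>direct_prod_edges E1 E2. \<exists>b\<in>set Bs'. u \<in> b \<and> v \<in> b"
    proof (clarify)
      fix a v b u assume e: "((a, v), (b, u)) \<in> direct_prod_edges E1 E2"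
      then have ab: "(a, b) \<in> E1" and vu: "(v, u) \<in> E2" by (auto simp: dpe_mem)
      have abV: "a \<in> V1" "b \<in> V1" using ab E1sub by auto
      have vuV: "v \<in> V2" "u \<in> V2" using vu E2sub by auto
      have uv: "(u, v) \<in> E2" using vu symE2 by (auto simp: sym_def)
      show "\<exists>bb\<in>set Bs'. (a, v) \<in> bb \<and> (b, u) \<in> bb"
      proof (cases "a \<in> A")
        case aA: True
        show ?thesis
        proof (cases "b \<in> A")
          case True
          obtain j where j: "j < n" "v \<in> Bs ! j" "u \<in> Bs ! j" using ecovI[OF vu] by blast
          have "(a, v) \<in> f (j * M)" "(b, u) \<in> f (j * M)" using inC[OF aA j(2,1)] inC[OF True j(3,1)] posA by auto
          then show ?thesis using inBs'[OF jM[OF j(1)]] by blast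
        next
          case False
          then have "(b, u) \<in> NV" using abV vuV unfolding NV_def by auto
          then obtain k where "k < n * M" "(b, u) \<in> f k" "\<forall>bb\<in>A. (bb, v) \<in> f k"
            using covN[of "(b, u)"] uv by auto
          then show ?thesis using inBs' aA by blast
        qed
      next
        case False
        then have "(a, v) \<in> NV" using abV vuV unfolding NV_def by auto
        moreover have bA: "b \<in> A" using False Acov abV ab by blast
        ultimately obtain k where "k < n * M" "(a, v) \<in> f k" "\<forall>bb\<in>A. (bb, u) \<in> f k"
            using covN[of "(a, v)"] vu by auto
        then show ?thesis using inBs' bA by blast
      qed
    qed
    show "\<forall>v i j k. i \<le> j \<and> j \<le> k \<and> k < length Bs' \<and> v \<in> Bs' ! i \<and> v \<in> Bs' ! k \<longrightarrow> v \<in> Bs' ! j"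
    proof (intro allI impI)
      fix x i j k assume H: "i \<le> j \<and> j \<le> k \<and> k < length Bs' \<and> x \<in> Bs' ! i \<and> x \<in> Bs' ! k"
      then have ij: "i \<le> j" "j \<le> k" "k < n * M" using lenBs' by auto
      have jn: "j < n * M" "i < n * M" using ij by auto
      have xi: "x \<in> f i" and xk: "x \<in> f k" using H nthBs' ij jn by auto
      obtain a w where aw: "x = (a, w)" by (cases x)
      have xV: "x \<in> V1 \<times> V2" using xi fsub by blast
      show "x \<in> Bs' ! j"
      proof (cases "a \<in> A")
        case True
        have "w \<in> nb V2 E2 (Bs ! (j div M))"
        proof (rule blk[of "i div M" "j div M" "k div M"])
          show "i div M \<le> j div M" "j div M \<le> k div M" using ij by (auto intro: div_le_mono)
          show "k div M < n" using kdiv ij by simp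
          show "w \<in> V2" using xV aw by auto
          show "w \<in> nb V2 E2 (Bs ! (i div M))" using xi memA[OF True] aw unfolding C_def by auto
          show "w \<in> nb V2 E2 (Bs ! (k div M))" using xk memA[OF True] aw unfolding C_def by auto
        qed
        then have "x \<in> f j" using memA[OF True] aw True unfolding C_def by auto
        then show ?thesis using nthBs' jn by simp
      next
        case False
        then have xN: "x \<in> NV" using xV aw unfolding NV_def by auto
        have mi: "i mod M \<noteq> 0" "Lst ! (i mod M - 1) = x" "sel (snd x) = i div M" using memN[OF xN xi] by auto
        have mk: "k mod M \<noteq> 0" "Lst ! (k mod M - 1) = x" "sel (snd x) = k div M" using memN[OF xN xk] by auto
        have "i mod M - 1 = k mod M - 1"
          using nth_eq_iff_index_eq[OF dL, of "i mod M - 1" "k mod M - 1"] N_def modM[OF mi(1)] modM[OF mk(1)] mi(2) mk(2) by simp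
        then have "i mod M = k mod M" using mi(1) mk(1) by simp
        moreover have "i div M = k div M" using mi mk by simp
        moreover have "i = i div M * M + i mod M" "k = k div M * M + k mod M" by simp_all
        ultimately have "i = k" by simp
        then have "j = i" using ij by simp
        then show ?thesis using H by simp
      qed
    qed
  qed
  have width: "\<forall>b\<in>set Bs'. card b \<le> card A * K * (max_degree V2 E2 + 1) + 1"
  proof
    fix bb assume "bb \<in> set Bs'"
    then obtain k where k: "k < n * M" "bb = f k" by (auto simp: Bs'_def)
    have Cw: "card (C j) \<le> card A * K * (max_degree V2 E2 + 1)" if j: "j < n" for j
    proof -
      have "card (C j) = card A * card (nb V2 E2 (Bs ! j))"
        unfolding C_def by (simp add: card_cartesian_product)
      also have "\<dots> \<le> card A * (card (Bs ! j) * (max_degree V2 E2 + 1))"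
        using card_nb[OF G2] BVj j by (simp add: mult_le_mono2)
      also have "\<dots> \<le> card A * (K * (max_degree V2 E2 + 1))"
        using wBj j by (intro mult_le_mono2 mult_le_mono1) simp
      finally show ?thesis by (simp only: mult.assoc)
    qed
    have fC: "finite (C j)" for j
      using fV1 fV2 AV finite_subset Csub by (meson finite_SigmaI)
    have cw: "card (C (k div M)) \<le> card A * K * (max_degree V2 E2 + 1)" using Cw kdiv k by simp
    have "card (insert z (C (k div M))) \<le> Suc (card (C (k div M)))" for z using fC by (simp add: card_insert_if)
    then have "card (f k) \<le> Suc (card (C (k div M)))" unfolding f_def by auto
    then show "card bb \<le> card A * K * (max_degree V2 E2 + 1) + 1"
      using cw k(2) by simp
  qed
  show ?thesis using pd' width by blast
qed


lemma triv_td: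
  assumes "graph V E"
  shows "tree_decomp V E {0} {} (\<lambda>_. V)"
proof -
  have t: "is_tree {0::nat} {}"
    unfolding is_tree_def graph_def connected_def is_cycle_def sym_def irrefl_def by simp
  show ?thesis using assms t unfolding tree_decomp_def graph_def connected_def by auto
qed

lemma triv_pd:
  assumes "graph V E"
  shows "path_decomp V E [V]"
  using assms unfolding path_decomp_def graph_def by auto

theorem mainTheorem18:
  fixes V1 :: "'a set" and E1 :: "('a \<times> 'a) set"
    and V2 :: "'b set" and E2 :: "('b \<times> 'b) set"
  assumes "graph V1 E1" and "connected V1 E1"
    and "graph V2 E2" and "connected V2 E2"
  shows "treewidth (V1 \<times> V2) (direct_prod_edges E1 E2)
           \<le> vertex_cover_number V1 E1 * (treewidth V2 E2 + 1) * (max_degree V2 E2 + 1)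
       \<and> pathwidth (V1 \<times> V2) (direct_prod_edges E1 E2)
           \<le> vertex_cover_number V1 E1 * (pathwidth V2 E2 + 1) * (max_degree V2 E2 + 1)"
proof -
  let ?PE = "direct_prod_edges E1 E2"
  let ?D = "max_degree V2 E2"
  let ?P = "\<lambda>k. \<exists>A. A \<subseteq> V1 \<and> card A = k \<and> (\<forall>u\<in>V1 - A. \<forall>v\<in>V1 - A. (u, v) \<notin> E1)"
  have "?P (card V1)" by blast
  then have "?P (Least ?P)" by (rule LeastI)
  then obtain A where AV: "A \<subseteq> V1" and cA: "card A = vertex_cover_number V1 E1"
    and Acov: "\<forall>u\<in>V1 - A. \<forall>v\<in>V1 - A. (u, v) \<notin> E1"
    unfolding vertex_cover_number_def by blast
  let ?Q = "\<lambda>k. \<exists>I F B. tree_decomp V2 E2 I F B \<and> k = Max (card ` B ` I) - 1"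
  have "?Q (Max (card ` (\<lambda>_. V2) ` {0::nat}) - 1)" using triv_td[OF assms(3)] by blast
  then have "?Q (Least ?Q)" by (rule LeastI)
  then obtain I F B where td: "tree_decomp V2 E2 I F B"
    and tw: "treewidth V2 E2 = Max (card ` B ` I) - 1"
    unfolding treewidth_def by blast
  have fI: "finite I" using td_finite_ne[OF td] by simp
  have wB: "\<forall>i\<in>I. card (B i) \<le> treewidth V2 E2 + 1"
  proof
    fix i assume "i \<in> I"
    then have "card (B i) \<le> Max (card ` B ` I)" using fI by (intro Max_ge) auto
    then show "card (B i) \<le> treewidth V2 E2 + 1" using tw by linarith
  qed
  obtain I' F' B' where td': "tree_decomp (V1 \<times> V2) ?PE I' F' B'"
    and w': "\<forall>j\<in>I'. card (B' j) \<le> card A * (treewidth V2 E2 + 1) * (?D + 1) + 1"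
    using tw_bound[OF assms(1) assms(3) AV Acov td wB] by blast
  have fI': "finite I'" "I' \<noteq> {}" using td_finite_ne[OF td'] by auto
  have "treewidth (V1 \<times> V2) ?PE \<le> Max (card ` B' ` I') - 1"
    unfolding treewidth_def by (rule Least_le) (use td' in blast)
  moreover have "Max (card ` B' ` I') \<le> card A * (treewidth V2 E2 + 1) * (?D + 1) + 1"
    using fI' w' by (intro Max.boundedI) auto
  ultimately have T1: "treewidth (V1 \<times> V2) ?PE \<le> vertex_cover_number V1 E1 * (treewidth V2 E2 + 1) * (?D + 1)"
    unfolding cA[symmetric] by linarith
  let ?R = "\<lambda>k. \<exists>Bs. path_decomp V2 E2 Bs \<and> k = Max (card ` set Bs) - 1"
  have "?R (Max (card ` set [V2]) - 1)" using triv_pd[OF assms(3)] by blast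
  then have "?R (Least ?R)" by (rule LeastI)
  then obtain Bs where pd: "path_decomp V2 E2 Bs"
    and pw: "pathwidth V2 E2 = Max (card ` set Bs) - 1"
    unfolding pathwidth_def by blast
  have wBs: "\<forall>b\<in>set Bs. card b \<le> pathwidth V2 E2 + 1"
  proof
    fix b assume "b \<in> set Bs"
    then have "card b \<le> Max (card ` set Bs)" by (intro Max_ge) auto
    then show "card b \<le> pathwidth V2 E2 + 1" using pw by linarith
  qed
  obtain Bs' where pd': "path_decomp (V1 \<times> V2) ?PE Bs'"
    and w2: "\<forall>b\<in>set Bs'. card b \<le> card A * (pathwidth V2 E2 + 1) * (?D + 1) + 1"
    using pw_bound[OF assms(1) assms(3) AV Acov pd wBs] by blast
  have ne': "set Bs' \<noteq> {}" using pd' unfolding path_decomp_def by simp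
  have "pathwidth (V1 \<times> V2) ?PE \<le> Max (card ` set Bs') - 1"
    unfolding pathwidth_def by (rule Least_le) (use pd' in blast)
  moreover have "Max (card ` set Bs') \<le> card A * (pathwidth V2 E2 + 1) * (?D + 1) + 1"
    using ne' w2 by (intro Max.boundedI) auto
  ultimately have T2: "pathwidth (V1 \<times> V2) ?PE \<le> vertex_cover_number V1 E1 * (pathwidth V2 E2 + 1) * (?D + 1)"
    unfolding cA[symmetric] by linarith
  show ?thesis using T1 T2 by blast
qed

end
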